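(* Let $r\ge 3$ and let $\mathbb{P}^m_r$ be an $r$-uniform hyperpath with $m$ edges. Then $\lambda(\mathbb{P}^m_r)=2r-2$ if $m=1$, $\lambda(\mathbb{P}^m_r)=2r-1$ if $m=2$, and $\lambda(\mathbb{P}^m_r)=2r$ if $m\ge 3$.
   Context: An $r$-uniform hypergraph (every edge has exactly $r$ vertices) with $m$ edges is a hyperpath $\mathbb{P}^m_r$ if its edges can be ordered $e_1,\dots,e_m$ and there are vertices $v_1,\dots,v_{m-1}$ such that for $1\le i<j\le m$, $e_i\cap e_j=\emptyset$ if $j\ne i+1$ and $e_i\cap e_{i+1}=\{v_i\}$; its vertex set is the union of its edges. An $L(2,1)$-colouring of a hypergraph $\mathbb{H}=(V,E)$ is a map $f:V\to\mathbb{Z}_{\ge 0}$ such that $|f(u)-f(v)|\ge 2$ whenever $u\ne v$ lie in a common edge, and $|f(u)-f(v)|\ge 1$ whenever there are edges $e_1\ni v$, $e_2\ni u$ with $(e_1\cap e_2)\setminus\{u,v\}\ne\emptyset$. Its span is $\max f-\min f$, and $\lambda(\mathbb{H})$ is the minimum span. *)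

theory Defs
  imports Main
begin

definition uniform :: "nat \<Rightarrow> 'a set set \<Rightarrow> bool" where
  "uniform r E \<longleftrightarrow> (\<forall>e\<in>E. finite e \<and> card e = r)"

definition hyperpath :: "nat \<Rightarrow> nat \<Rightarrow> 'a set \<Rightarrow> 'a set set \<Rightarrow> bool" where
  "hyperpath r m V E \<longleftrightarrow> uniform r E \<and> V = \<Union>E \<and>
     (\<exists>es vs. length es = m \<and> distinct es \<and> set es = E \<and> length vs = m - 1 \<and>
        (\<forall>i j. i < j \<and> j < m \<longrightarrow>
           (if j = i + 1 then es ! i \<inter> es ! j = {vs ! i} else es ! i \<inter> es ! j = {})))"

definition L21_colouring :: "'a set \<Rightarrow> 'a set set \<Rightarrow> ('a \<Rightarrow> nat) \<Rightarrow> bool" where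
  "L21_colouring V E f \<longleftrightarrow>
     (\<forall>u\<in>V. \<forall>v\<in>V. u \<noteq> v \<and> (\<exists>e\<in>E. u \<in> e \<and> v \<in> e) \<longrightarrow>
         \<bar>int (f u) - int (f v)\<bar> \<ge> 2) \<and>
     (\<forall>u\<in>V. \<forall>v\<in>V. u \<noteq> v \<and> (\<exists>e1\<in>E. \<exists>e2\<in>E. v \<in> e1 \<and> u \<in> e2 \<and> (e1 \<inter> e2) - {u, v} \<noteq> {}) \<longrightarrow>
         \<bar>int (f u) - int (f v)\<bar> \<ge> 1)"

definition span :: "'a set \<Rightarrow> ('a \<Rightarrow> nat) \<Rightarrow> nat" where
  "span V f = Max (f ` V) - Min (f ` V)"

definition lambda21 :: "'a set \<Rightarrow> 'a set set \<Rightarrow> nat" where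
  "lambda21 V E = (LEAST k. \<exists>f. L21_colouring V E f \<and> span V f = k)"

end

theory Submission
  imports Defs
begin


definition sparse :: "nat set \<Rightarrow> bool" where
  "sparse S \<longleftrightarrow> (\<forall>x\<in>S. \<forall>y\<in>S. x \<noteq> y \<longrightarrow> x + 2 \<le> y \<or> y + 2 \<le> x)"

lemma sparse_card:
  assumes "finite S" "sparse S" "S \<subseteq> {a..b}"
  shows "2 * card S \<le> b - a + 2"
proof -
  have "inj_on (\<lambda>x. (x - a) div 2) S"
  proof (rule inj_onI)
    fix x y assume xy: "x \<in> S" "y \<in> S" "(x - a) div 2 = (y - a) div 2"
    have "a \<le> x" "a \<le> y" using xy assms(3) by auto
    have e1: "x - a = 2 * ((x - a) div 2) + (x - a) mod 2" "y - a = 2 * ((y - a) div 2) + (y - a) mod 2" by simp_all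
    have "(x - a) mod 2 < 2" "(y - a) mod 2 < 2" by simp_all
    with xy(3) e1 \<open>a \<le> x\<close> \<open>a \<le> y\<close> have "x \<le> y + 1 \<and> y \<le> x + 1" by linarith
    with xy(1,2) assms(2) show "x = y" unfolding sparse_def by fastforce
  qed
  moreover have "(\<lambda>x. (x - a) div 2) ` S \<subseteq> {..(b-a) div 2}"
    using assms(3) by (force intro: div_le_mono)
  ultimately have "card S \<le> card {..(b-a) div 2}"
    by (metis card_inj_on_le finite_atMost)
  thus ?thesis by simp
qed

lemma bij_ext:
  assumes "finite A" "finite B" "card A = card B" "P \<subseteq> A" "inj_on p P" "p ` P \<subseteq> B"
  shows "\<exists>g. bij_betw g A B \<and> (\<forall>x\<in>P. g x = p x)"
proof -
  have fP: "finite P" using assms(1,4) finite_subset by blast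
  have c1: "card (A - P) = card A - card P" using assms(4) fP by (simp add: card_Diff_subset)
  have c2: "card (B - p ` P) = card B - card P"
    using assms(5,6) fP by (simp add: card_Diff_subset card_image)
  obtain h where h: "bij_betw h (A - P) (B - p ` P)"
    using finite_same_card_bij[of "A - P" "B - p ` P"] assms c1 c2 by auto
  define g where "g x = (if x \<in> P then p x else h x)" for x
  have "bij_betw g A B"
  proof -
    have "bij_betw g P (p ` P)"
      using assms(5) unfolding bij_betw_def inj_on_def g_def by auto
    moreover have "bij_betw g (A - P) (B - p ` P)"
      using h unfolding g_def by (smt (verit) DiffD2 bij_betw_cong)
    ultimately have "bij_betw g (P \<union> (A - P)) (p ` P \<union> (B - p ` P))"
      by (intro bij_betw_combine) auto
    moreover have "P \<union> (A - P) = A" "p ` P \<union> (B - p ` P) = B" using assms(4,6) by auto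
    ultimately show ?thesis by simp
  qed
  thus ?thesis unfolding g_def by auto
qed



lemma upper:
  fixes es :: "'a set list" and vs :: "'a list" and K :: "nat \<Rightarrow> nat set" and T :: "nat \<Rightarrow> nat"
  assumes len: "length es = m"
    and fin: "\<forall>i<m. finite (es!i) \<and> card (es!i) = r"
    and adj: "\<forall>i. i+1<m \<longrightarrow> es!i \<inter> es!(i+1) = {vs!i}"
    and far: "\<forall>i j. i+1<j \<and> j<m \<longrightarrow> es!i \<inter> es!j = {}"
    and Kfin: "\<forall>i<m. finite (K i) \<and> card (K i) = r \<and> sparse (K i)"
    and KT: "\<forall>i. i+1<m \<longrightarrow> K i \<inter> K (i+1) = {T i}"
    and Tne: "\<forall>i. i+2<m \<longrightarrow> T i \<noteq> T (i+1)"
  shows "\<exists>f. L21_colouring (\<Union>(set es)) (set es) f \<and> (\<forall>x\<in>\<Union>(set es). \<exists>i<m. f x \<in> K i)"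
proof -
  have vsin: "vs!i \<in> es!i \<and> vs!i \<in> es!(i+1)" if "i+1<m" for i using adj that by blast
  have ex: "\<exists>g. bij_betw g (es!i) (K i) \<and> (0<i \<longrightarrow> g (vs!(i-1)) = T (i-1)) \<and> (i+1<m \<longrightarrow> g (vs!i) = T i)"
    if im: "i<m" for i
  proof -
    define P where "P = (if 0<i then {vs!(i-1)} else {}) \<union> (if i+1<m then {vs!i} else {})"
    define p where "p x = (if 0<i \<and> x = vs!(i-1) then T (i-1) else T i)" for x
    have neq: "vs!(i-1) \<noteq> vs!i" if "0<i" "i+1<m"
    proof
      assume eq: "vs!(i-1) = vs!i"
      have "vs!(i-1) \<in> es!(i-1)" using vsin[of "i-1"] that by simp
      moreover have "vs!i \<in> es!(i+1)" using vsin[of i] that by simp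
      moreover have "es!(i-1) \<inter> es!(i+1) = {}" using far[rule_format, of "i-1" "i+1"] that by simp
      ultimately show False using eq by auto
    qed
    have Tn: "T (i-1) \<noteq> T i" if "0<i" "i+1<m" using Tne[rule_format, of "i-1"] that by simp
    have K1: "T (i-1) \<in> K i" if "0<i" using KT[rule_format, of "i-1"] im that by auto
    have K2: "T i \<in> K i" if "i+1<m" using KT that by auto
    have "P \<subseteq> es!i"
      unfolding P_def using vsin[of "i-1"] vsin[of i] im by auto
    moreover have "inj_on p P"
      unfolding P_def p_def inj_on_def using neq Tn by auto
    moreover have "p ` P \<subseteq> K i"
      unfolding P_def p_def using K1 K2 by auto
    moreover have "card (es!i) = card (K i)" "finite (es!i)" "finite (K i)" using fin Kfin im by auto
    ultimately obtain g where gb: "bij_betw g (es!i) (K i)" and gP: "\<forall>x\<in>P. g x = p x"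
      using bij_ext[of "es!i" "K i" P p] by blast
    have "0<i \<longrightarrow> g (vs!(i-1)) = T(i-1)" using gP unfolding P_def p_def by auto
    moreover have "i+1<m \<longrightarrow> g (vs!i) = T i" using gP neq unfolding P_def p_def by auto
    ultimately show ?thesis using gb by blast
  qed
  hence "\<forall>i. \<exists>g. i<m \<longrightarrow> bij_betw g (es!i) (K i) \<and> (0<i \<longrightarrow> g (vs!(i-1)) = T (i-1)) \<and> (i+1<m \<longrightarrow> g (vs!i) = T i)" by blast
  from choice[OF this] obtain g where g0: "\<forall>i. i<m \<longrightarrow> bij_betw (g i) (es!i) (K i) \<and> (0<i \<longrightarrow> g i (vs!(i-1)) = T (i-1)) \<and> (i+1<m \<longrightarrow> g i (vs!i) = T i)"
    by blast
  have g: "bij_betw (g i) (es!i) (K i) \<and> (0<i \<longrightarrow> g i (vs!(i-1)) = T (i-1)) \<and> (i+1<m \<longrightarrow> g i (vs!i) = T i)" if "i<m" for i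
    using g0 that by blast
  define f where "f x = g (LEAST i. x \<in> es!i) x" for x
  have fg: "f x = g i x" if "i<m" "x \<in> es!i" for i x
  proof -
    define j where "j = (LEAST i. x \<in> es!i)"
    have jx: "x \<in> es!j" and ji: "j \<le> i" using that LeastI[of "\<lambda>i. x \<in> es!i" i] Least_le[of "\<lambda>i. x \<in> es!i" i]
      unfolding j_def by auto
    show ?thesis
    proof (cases "j = i")
      case True then show ?thesis unfolding f_def j_def[symmetric] by simp
    next
      case False
      with ji have "j < i" by simp
      have "j + 1 = i"
      proof (rule ccontr)
        assume "j + 1 \<noteq> i"
        with \<open>j<i\<close> have "j+1<i" by simp
        with far that(1) have "es!j \<inter> es!i = {}" by blast
        with jx that(2) show False by blast
      qed
      with adj that jx have xv: "x = vs!j" by auto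
      have "g j x = T j" using g[of j] xv \<open>j+1=i\<close> that(1) by auto
      moreover have "g i x = T j" using g[of i] xv \<open>j+1=i\<close> that(1) by auto
      ultimately show ?thesis unfolding f_def j_def[symmetric] by simp
    qed
  qed
  have bij: "bij_betw f (es!i) (K i)" if "i<m" for i
    using bij_betw_cong[of "es!i" f "g i" "K i"] g[OF that] fg[OF that] by auto
  have fv: "f (vs!i) = T i" if "i+1<m" for i
    using g[of i] fg[of i "vs!i"] vsin[OF that] that by auto
  have esE: "e \<in> set es \<longleftrightarrow> (\<exists>i<m. e = es!i)" for e using len by (auto simp: in_set_conv_nth)
  have c1: "f x + 2 \<le> f y \<or> f y + 2 \<le> f x" if "i<m" "x \<in> es!i" "y \<in> es!i" "x \<noteq> y" for i x y
  proof -
    have "f x \<in> K i" "f y \<in> K i" "f x \<noteq> f y" using bij[OF that(1)] that(2-4)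
      unfolding bij_betw_def inj_on_def by auto
    thus ?thesis using Kfin that(1) unfolding sparse_def by blast
  qed
  have c2: "f x \<noteq> f y" if "i+1<m" "x \<in> es!i" "y \<in> es!(i+1)" "x \<noteq> vs!i" "y \<noteq> vs!i" for i x y
  proof
    assume eq: "f x = f y"
    have "f x \<in> K i" "f y \<in> K (i+1)" using bij[of i] bij[of "i+1"] that unfolding bij_betw_def by auto
    with eq KT that(1) have "f x = T i" by auto
    hence "f x = f (vs!i)" using fv that(1) by simp
    moreover have "vs!i \<in> es!i" using vsin that(1) by simp
    ultimately show False using bij[of i] that unfolding bij_betw_def inj_on_def by auto
  qed
  have "L21_colouring (\<Union>(set es)) (set es) f"
    unfolding L21_colouring_def
  proof (intro conjI ballI impI)
    fix u v assume "u \<in> \<Union>(set es)" "v \<in> \<Union>(set es)" and h: "u \<noteq> v \<and> (\<exists>e\<in>set es. u \<in> e \<and> v \<in> e)"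
    then obtain e where "e \<in> set es" "u \<in> e" "v \<in> e" by blast
    then obtain i where "i<m" "u \<in> es!i" "v \<in> es!i" using esE[of e] by blast
    with c1[of i u v] h show "2 \<le> \<bar>int (f u) - int (f v)\<bar>" by auto
  next
    fix u v assume "u \<in> \<Union>(set es)" "v \<in> \<Union>(set es)" and h: "u \<noteq> v \<and> (\<exists>e1\<in>set es. \<exists>e2\<in>set es. v \<in> e1 \<and> u \<in> e2 \<and> e1 \<inter> e2 - {u, v} \<noteq> {})"
    then obtain e1 e2 w where "e1 \<in> set es" "e2 \<in> set es" "v \<in> e1" "u \<in> e2" "w \<in> e1" "w \<in> e2" "w \<noteq> u" "w \<noteq> v"
      by blast
    then obtain i j where ij: "i<m" "j<m" "v \<in> es!i" "u \<in> es!j" "w \<in> es!i" "w \<in> es!j" "w \<noteq> u" "w \<noteq> v"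
      using esE[of e1] esE[of e2] by blast
    have "f u \<noteq> f v"
    proof (cases "i = j")
      case True then show ?thesis using c1[of i u v] ij h by auto
    next
      case False
      show ?thesis
      proof (cases "i < j")
        case True
        have "i + 1 = j"
        proof (rule ccontr)
          assume "i+1 \<noteq> j" with True have "i+1<j" by simp
          with far ij(2) have "es!i \<inter> es!j = {}" by blast
          with ij show False by blast
        qed
        hence "es!i \<inter> es!(i+1) = {vs!i}" using adj[rule_format, of i] ij(2) by simp
        hence "w = vs!i" using ij \<open>i+1=j\<close> by auto
        then show ?thesis using c2[of i v u] ij \<open>i+1=j\<close> by auto
      next
        case False2: False
        with False have "j < i" by simp
        have "j + 1 = i"
        proof (rule ccontr)
          assume "j+1 \<noteq> i" with \<open>j<i\<close> have "j+1<i" by simp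
          with far ij(1) have "es!j \<inter> es!i = {}" by blast
          with ij show False by blast
        qed
        hence "es!j \<inter> es!(j+1) = {vs!j}" using adj[rule_format, of j] ij(1) by simp
        hence "w = vs!j" using ij \<open>j+1=i\<close> by auto
        then show ?thesis using c2[of j u v] ij \<open>j+1=i\<close> by auto
      qed
    qed
    thus "1 \<le> \<bar>int (f u) - int (f v)\<bar>" by auto
  qed
  moreover have "\<forall>x\<in>\<Union>(set es). \<exists>i<m. f x \<in> K i"
  proof
    fix x assume "x \<in> \<Union>(set es)"
    then obtain e where "e \<in> set es" "x \<in> e" by blast
    then obtain i where "i<m" "x \<in> es!i" using esE[of e] by blast
    thus "\<exists>i<m. f x \<in> K i" using bij[of i] unfolding bij_betw_def by blast
  qed
  ultimately show ?thesis by blast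
qed



lemma miss:
  assumes "finite X" "inj_on f X" "f ` X \<subseteq> {a..b}" "Tm \<subseteq> {a..b}" "f ` X \<inter> Tm = {}"
  shows "card X + card Tm \<le> Suc b - a"
proof -
  have "f ` X \<subseteq> {a..b} - Tm" using assms by blast
  hence "card (f ` X) \<le> card ({a..b} - Tm)" by (intro card_mono) auto
  moreover have "card ({a..b} - Tm) = card {a..b} - card Tm"
    using assms(4) by (simp add: card_Diff_subset finite_subset)
  moreover have "card (f ` X) = card X" using assms(2) by (simp add: card_image)
  moreover have "card Tm \<le> card {a..b}" using card_mono[OF finite_atLeastAtMost assms(4)] .
  ultimately show ?thesis by simp
qed

lemma alt:
  fixes B :: "nat set"
  assumes "\<forall>t. a \<le> t \<and> t < b \<longrightarrow> (t \<in> B \<longleftrightarrow> t+1 \<notin> B)" "a \<in> B"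
  shows "a + k \<le> b \<Longrightarrow> (a + k \<in> B \<longleftrightarrow> even k)"
proof (induction k)
  case 0 then show ?case using assms(2) by simp
next
  case (Suc k)
  hence "a + k \<in> B \<longleftrightarrow> even k" by simp
  moreover have "a + k \<in> B \<longleftrightarrow> a + k + 1 \<notin> B" using assms(1) Suc.prems by simp
  ultimately show ?case by auto
qed

lemma card_two:
  assumes "finite A" "finite B" "card A = r" "card B = r" "A \<inter> B = {v}"
  shows "card (A \<union> B) = 2*r - 1"
  using card_Un_Int[OF assms(1,2)] assms by simp

definition sepE :: "('a \<Rightarrow> nat) \<Rightarrow> 'a set \<Rightarrow> bool" where
  "sepE f e \<longleftrightarrow> (\<forall>x\<in>e. \<forall>y\<in>e. x \<noteq> y \<longrightarrow> f x + 2 \<le> f y \<or> f y + 2 \<le> f x)"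

lemma sepE_D: "sepE f e \<Longrightarrow> x \<in> e \<Longrightarrow> y \<in> e \<Longrightarrow> f x = f y + 1 \<Longrightarrow> False"
proof -
  assume h: "sepE f e" "x \<in> e" "y \<in> e" "f x = f y + 1"
  hence "x \<noteq> y" by auto
  with h have "f x + 2 \<le> f y \<or> f y + 2 \<le> f x" unfolding sepE_def by blast
  with h(4) show False by linarith
qed

lemma core1:
  assumes r: "r \<ge> 3"
    and fin: "finite e0" "finite e1" "finite e2" "card e0 = r" "card e1 = r" "card e2 = r"
    and i01: "e0 \<inter> e1 = {v0}" and i12: "e1 \<inter> e2 = {v1}"
    and sp: "sepE f e0" "sepE f e1" "sepE f e2"
    and dX: "inj_on f (e0 \<union> e1)" and dY: "inj_on f (e1 \<union> e2)"
    and rng: "\<forall>x\<in>e0\<union>e1\<union>e2. mn \<le> f x \<and> f x \<le> mn + (2*r-1)"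
    and c0: "f v0 = mn" and c1: "f v1 = mn + (2*r-1)"
  shows False
proof -
  define mx where "mx = mn + (2*r-1)"
  have v0: "v0 \<in> e0" "v0 \<in> e1" and v1: "v1 \<in> e1" "v1 \<in> e2" using i01 i12 by auto
  have cX: "card (e0 \<union> e1) = 2*r-1" using card_two[OF fin(1,2,4,5) i01] .
  have cY: "card (e1 \<union> e2) = 2*r-1" using card_two[OF fin(2,3,5,6) i12] .
  have n1: "mn + 1 \<notin> f ` (e0 \<union> e1)"
  proof
    assume "mn + 1 \<in> f ` (e0 \<union> e1)"
    then obtain x where "x \<in> e0 \<union> e1" "mn + 1 = f x" by (rule imageE)
    hence "x \<in> e0 \<union> e1" "f x = f v0 + 1" using c0 by auto
    thus False using sepE_D[OF sp(1) _ v0(1)] sepE_D[OF sp(2) _ v0(2)] by blast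
  qed
  have n2: "mx - 1 \<notin> f ` (e1 \<union> e2)"
  proof
    assume "mx - 1 \<in> f ` (e1 \<union> e2)"
    then obtain x where "x \<in> e1 \<union> e2" "f v1 = f x + 1" using c1 r unfolding mx_def by force
    thus False using sepE_D[OF sp(2) v1(1)] sepE_D[OF sp(3) v1(2)] by blast
  qed
  have fX: "f ` (e0 \<union> e1) = {mn..mx} - {mn+1}"
  proof (rule card_subset_eq)
    show "finite ({mn..mx} - {mn+1})" by simp
    have "f ` (e0 \<union> e1) \<subseteq> {mn..mx}" using rng unfolding mx_def by force
    thus "f ` (e0 \<union> e1) \<subseteq> {mn..mx} - {mn+1}" using n1 by blast
    have "card ({mn..mx} - {mn+1}) = 2*r-1" unfolding mx_def using r by simp
    moreover have "card (f ` (e0 \<union> e1)) = 2*r-1" using cX dX by (simp add: card_image)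
    ultimately show "card (f ` (e0 \<union> e1)) = card ({mn..mx} - {mn+1})" by simp
  qed
  have fY: "f ` (e1 \<union> e2) = {mn..mx} - {mx-1}"
  proof (rule card_subset_eq)
    show "finite ({mn..mx} - {mx-1})" by simp
    have "f ` (e1 \<union> e2) \<subseteq> {mn..mx}" using rng unfolding mx_def by force
    thus "f ` (e1 \<union> e2) \<subseteq> {mn..mx} - {mx-1}" using n2 by blast
    have "mx - 1 \<in> {mn..mx}" unfolding mx_def using r by (simp, arith)
    hence "card ({mn..mx} - {mx-1}) = card {mn..mx} - 1" by (simp add: card_Diff_singleton)
    hence "card ({mn..mx} - {mx-1}) = 2*r-1" unfolding mx_def using r by simp
    moreover have "card (f ` (e1 \<union> e2)) = 2*r-1" using cY dY by (simp add: card_image)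
    ultimately show "card (f ` (e1 \<union> e2)) = card ({mn..mx} - {mx-1})" by simp
  qed
  have "mn + 1 \<in> f ` (e1 \<union> e2)" using fY r unfolding mx_def by auto
  then obtain w where w0: "w \<in> e1 \<union> e2" "mn + 1 = f w" by (rule imageE)
  hence w: "w \<in> e1 \<union> e2" "f w = mn + 1" by simp_all
  have we: "w \<in> e2" using w sepE_D[OF sp(2) _ v0(2)] c0 by auto
  have "mn + 2 \<in> f ` (e1 \<union> e2)" using fY r unfolding mx_def by auto
  then obtain z where z0: "z \<in> e1 \<union> e2" "mn + 2 = f z" by (rule imageE)
  hence z: "z \<in> e1 \<union> e2" "f z = mn + 2" by simp_all
  have ze: "z \<in> e1" using z w we sepE_D[OF sp(3), of z w] by auto
  define B where "B = f ` e1"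
  have altB: "\<forall>t. mn + 2 \<le> t \<and> t < mx \<longrightarrow> (t \<in> B \<longleftrightarrow> t+1 \<notin> B)"
  proof (intro allI impI)
    fix t assume t: "mn + 2 \<le> t \<and> t < mx"
    have "t \<in> f ` (e0 \<union> e1)" "t + 1 \<in> f ` (e0 \<union> e1)" using t fX by auto
    then obtain x y where xy0: "x \<in> e0 \<union> e1" "t = f x" "y \<in> e0 \<union> e1" "t + 1 = f y" by (meson imageE)
    hence xy: "x \<in> e0 \<union> e1" "f x = t" "y \<in> e0 \<union> e1" "f y = t + 1" by simp_all
    have "\<not> (t \<in> B \<and> t + 1 \<in> B)"
    proof
      assume "t \<in> B \<and> t + 1 \<in> B"
      then obtain x' y' where "x' \<in> e1" "y' \<in> e1" "f y' = f x' + 1" unfolding B_def by force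
      thus False using sepE_D[OF sp(2)] by blast
    qed
    moreover have "t \<in> B \<or> t + 1 \<in> B"
    proof (rule ccontr)
      assume "\<not> (t \<in> B \<or> t + 1 \<in> B)"
      hence "t \<notin> f ` e1" "t + 1 \<notin> f ` e1" unfolding B_def by auto
      hence "x \<notin> e1" "y \<notin> e1" using xy by force+
      hence "x \<in> e0" "y \<in> e0" using xy by auto
      thus False using sepE_D[OF sp(1), of y x] xy by auto
    qed
    ultimately show "t \<in> B \<longleftrightarrow> t+1 \<notin> B" by blast
  qed
  have "mn + 2 \<in> B" unfolding B_def using z ze by force
  from alt[OF altB this, of "2*r-3"] have "mn + 2 + (2*r-3) \<in> B \<longleftrightarrow> even (2*r-3)"
    using r unfolding mx_def by simp
  moreover have "mn + 2 + (2*r-3) = f v1" using c1 r by simp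
  moreover have "2*r-3 = 2*(r-2)+1" using r by simp
  hence "\<not> even (2*r-3)" by simp
  ultimately have "f v1 \<notin> B" by simp
  thus False unfolding B_def using v1 by blast
qed

lemma core:
  assumes r: "r \<ge> 3"
    and fin: "finite e0" "finite e1" "finite e2" "card e0 = r" "card e1 = r" "card e2 = r"
    and i01: "e0 \<inter> e1 = {v0}" and i12: "e1 \<inter> e2 = {v1}" and i02: "e0 \<inter> e2 = {}"
    and sp: "sepE f e0" "sepE f e1" "sepE f e2"
    and dX: "inj_on f (e0 \<union> e1)" and dY: "inj_on f (e1 \<union> e2)"
    and rng: "\<forall>x\<in>e0\<union>e1\<union>e2. mn \<le> f x \<and> f x \<le> mn + (2*r-1)"
  shows False
proof -
  define mx where "mx = mn + (2*r-1)"
  have v0: "v0 \<in> e0" "v0 \<in> e1" and v1: "v1 \<in> e1" "v1 \<in> e2" using i01 i12 by auto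
  have cX: "card (e0 \<union> e1) = 2*r-1" using card_two[OF fin(1,2,4,5) i01] .
  have cY: "card (e1 \<union> e2) = 2*r-1" using card_two[OF fin(2,3,5,6) i12] .
  have ends: "f v = mn \<or> f v = mx"
    if v: "v \<in> ea" "v \<in> eb" and sa: "sepE f ea" and sb: "sepE f eb" and fa: "finite ea" "finite eb"
      and c: "card (ea \<union> eb) = 2*r-1" and inj: "inj_on f (ea \<union> eb)"
      and rg: "\<forall>x\<in>ea\<union>eb. mn \<le> f x \<and> f x \<le> mx" for v ea eb
  proof (rule ccontr)
    assume "\<not> (f v = mn \<or> f v = mx)"
    moreover have "mn \<le> f v" "f v \<le> mx" using rg v by auto
    ultimately have lt: "mn < f v" "f v < mx" by auto
    have dj: "f ` (ea \<union> eb) \<inter> {f v - 1, f v + 1} = {}"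
    proof (rule ccontr)
      assume "f ` (ea \<union> eb) \<inter> {f v - 1, f v + 1} \<noteq> {}"
      then obtain x where x: "x \<in> ea \<union> eb" "f x = f v - 1 \<or> f x = f v + 1" by blast
      hence "f v = f x + 1 \<or> f x = f v + 1" using lt by auto
      thus False using x sepE_D[OF sa _ v(1)] sepE_D[OF sb _ v(2)] sepE_D[OF sa v(1)] sepE_D[OF sb v(2)] by blast
    qed
    have s1: "f ` (ea \<union> eb) \<subseteq> {mn..mx}" using rg by auto
    have s2: "{f v - 1, f v + 1} \<subseteq> {mn..mx}" using lt by auto
    from miss[OF _ inj s1 s2 dj] fa
    have "card (ea \<union> eb) + card {f v - 1, f v + 1} \<le> Suc mx - mn" by auto
    moreover have "card {f v - 1, f v + 1} = 2" using lt by simp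
    ultimately show False using c unfolding mx_def using r by simp
  qed
  have e0: "f v0 = mn \<or> f v0 = mx"
    by (rule ends[OF v0 sp(1,2) fin(1,2) cX dX]) (use rng in \<open>auto simp: mx_def\<close>)
  have e1: "f v1 = mn \<or> f v1 = mx"
    by (rule ends[OF v1 sp(2,3) fin(2,3) cY dY]) (use rng in \<open>auto simp: mx_def\<close>)
  have "v0 \<noteq> v1" using i02 v0 v1 by auto
  hence "f v0 \<noteq> f v1" using dX v0 v1 unfolding inj_on_def by blast
  with e0 e1 have "(f v0 = mn \<and> f v1 = mx) \<or> (f v1 = mn \<and> f v0 = mx)" by auto
  thus False
  proof
    assume "f v0 = mn \<and> f v1 = mx"
    thus False using core1[OF r fin i01 i12 sp dX dY rng] unfolding mx_def by blast
  next
    assume "f v1 = mn \<and> f v0 = mx"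
    moreover have "e2 \<inter> e1 = {v1}" "e1 \<inter> e0 = {v0}" using i01 i12 by auto
    moreover have "inj_on f (e2 \<union> e1)" "inj_on f (e1 \<union> e0)" using dX dY by (simp_all add: Un_commute)
    moreover have "\<forall>x\<in>e2\<union>e1\<union>e0. mn \<le> f x \<and> f x \<le> mn + (2*r-1)" using rng by auto
    ultimately show False using core1[OF r fin(3,2,1) fin(6,5,4), of v1 v0 f mn] sp unfolding mx_def by blast
  qed
qed



lemma card_lin: "card ((\<lambda>k. 2*k + c) ` {..<n}) = (n::nat)"
  by (subst card_image) (auto simp: inj_on_def)

lemma mem_lin: "x \<in> (\<lambda>k. 2*k + c) ` {..<n} \<longleftrightarrow> (\<exists>k<n. x = 2*k + (c::nat))"
  by auto

lemma par: "Suc (2*a) \<noteq> 2*(b::nat)" "2*b \<noteq> Suc (2*(a::nat))" by presburger+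

definition Kq :: "nat \<Rightarrow> nat \<Rightarrow> nat set" where
  "Kq r c = (if c = 0 then {0,3} \<union> (\<lambda>k. 2*k+6)`{..<r-2}
     else if c = 1 then {1,3} \<union> (\<lambda>k. 2*k+5)`{..<r-2}
     else if c = 2 then {1,4} \<union> (\<lambda>k. 2*k+6)`{..<r-2}
     else {0,2,4} \<union> (\<lambda>k. 2*k+7)`{..<r-3})"

definition Tq :: "nat \<Rightarrow> nat" where
  "Tq c = (if c = 0 then 3 else if c = 1 then 1 else if c = 2 then 4 else 0)"

lemma Kq_fin: "finite (Kq r c)" unfolding Kq_def by auto

lemma Kq_card: assumes "r \<ge> 3" shows "card (Kq r c) = r"
proof -
  have a: "card ({0,3} \<union> (\<lambda>k. 2*k+6)`{..<r-2}) = 2 + (r-2)"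
    by (subst card_Un_disjoint) (auto simp: card_lin)
  have b: "card ({1,3} \<union> (\<lambda>k. 2*k+5)`{..<r-2}) = 2 + (r-2)"
    by (subst card_Un_disjoint) (auto simp: card_lin)
  have c: "card ({1,4} \<union> (\<lambda>k. 2*k+6)`{..<r-2}) = 2 + (r-2)"
    by (subst card_Un_disjoint) (auto simp: card_lin)
  have d: "card ({0,2,4} \<union> (\<lambda>k. 2*k+7)`{..<r-3}) = 3 + (r-3)"
    by (subst card_Un_disjoint) (auto simp: card_lin)
  show ?thesis unfolding Kq_def using a b c d assms by auto
qed

lemma Kq_bound: assumes "r \<ge> 3" shows "Kq r c \<subseteq> {..2*r}"
  unfolding Kq_def using assms by auto

lemma Kq_sparse: "sparse (Kq r c)"
  unfolding Kq_def sparse_def by auto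

lemma Kq_int: assumes "r \<ge> 3" "c < 4" shows "Kq r c \<inter> Kq r (Suc c mod 4) = {Tq c}"
proof -
  have "c = 0 \<or> c = 1 \<or> c = 2 \<or> c = 3" using assms by auto
  thus ?thesis
  proof (elim disjE)
    assume "c = 0" thus ?thesis unfolding Kq_def Tq_def using assms by (auto simp: par)
  next
    assume "c = 1" thus ?thesis unfolding Kq_def Tq_def using assms by (auto simp: par)
  next
    assume "c = 2" thus ?thesis unfolding Kq_def Tq_def using assms by (auto simp: par)
  next
    assume "c = 3" thus ?thesis unfolding Kq_def Tq_def using assms by (auto simp: par)
  qed
qed

lemma Tq_ne: assumes "c < 4" shows "Tq c \<noteq> Tq (Suc c mod 4)"
proof -
  have "c = 0 \<or> c = 1 \<or> c = 2 \<or> c = 3" using assms by auto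
  thus ?thesis unfolding Tq_def by auto
qed



lemma lambda_eq:
  assumes LB: "\<And>g. L21_colouring V E g \<Longrightarrow> B \<le> span V g"
    and UB: "\<exists>g. L21_colouring V E g \<and> span V g \<le> B"
  shows "lambda21 V E = B"
proof -
  obtain g where g: "L21_colouring V E g" "span V g \<le> B" using UB by blast
  with LB have "span V g = B" by force
  show ?thesis unfolding lambda21_def
  proof (rule Least_equality)
    show "\<exists>f. L21_colouring V E f \<and> span V f = B" using g \<open>span V g = B\<close> by blast
    show "\<And>y. \<exists>f. L21_colouring V E f \<and> span V f = y \<Longrightarrow> B \<le> y" using LB by blast
  qed
qed

lemma span_le:
  assumes "finite V" "V \<noteq> {}" "\<forall>x\<in>V. f x \<le> B"
  shows "span V f \<le> B"
proof -
  note False = assms(2)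
  have "Max (f ` V) \<le> B" using assms False by (subst Max_le_iff) auto
  thus ?thesis unfolding span_def by simp
qed

theorem theorem3p11:
  fixes V :: "'a set" and E :: "'a set set" and r m :: nat
  assumes "r \<ge> 3" and "m \<ge> 1" and "hyperpath r m V E"
  shows "(m = 1 \<longrightarrow> lambda21 V E = 2 * r - 2) \<and>
         (m = 2 \<longrightarrow> lambda21 V E = 2 * r - 1) \<and>
         (m \<ge> 3 \<longrightarrow> lambda21 V E = 2 * r)"
proof -
  note r = assms(1)
  obtain es vs where len: "length es = m" and dist: "distinct es" and Ees: "set es = E"
    and lvs: "length vs = m - 1"
    and P: "\<forall>i j. i < j \<and> j < m \<longrightarrow>
           (if j = i + 1 then es ! i \<inter> es ! j = {vs ! i} else es ! i \<inter> es ! j = {})"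
    and uni: "uniform r E" and VE: "V = \<Union>E"
    using assms(3) unfolding hyperpath_def by blast
  have fin: "\<forall>i<m. finite (es!i) \<and> card (es!i) = r"
    using uni len Ees unfolding uniform_def by (metis nth_mem)
  have adj: "\<forall>i. i+1<m \<longrightarrow> es!i \<inter> es!(i+1) = {vs!i}"
  proof (intro allI impI)
    fix i assume "i+1<m" thus "es!i \<inter> es!(i+1) = {vs!i}" using P[rule_format, of i "i+1"] by simp
  qed
  have far: "\<forall>i j. i+1<j \<and> j<m \<longrightarrow> es!i \<inter> es!j = {}"
  proof (intro allI impI)
    fix i j assume "i+1<j \<and> j<m" thus "es!i \<inter> es!j = {}" using P[rule_format, of i j] by simp
  qed
  have VV: "V = \<Union>(set es)" using VE Ees by simp
  have esV: "es!i \<subseteq> V" if "i<m" for i using VV len that nth_mem by blast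
  have esE: "es!i \<in> E" if "i<m" for i using Ees len that nth_mem by blast
  have "\<forall>e\<in>set es. finite e" using fin len by (auto simp: in_set_conv_nth)
  hence finV: "finite V" unfolding VV by (intro finite_Union) auto
  have vsin: "vs!i \<in> es!i \<and> vs!i \<in> es!(i+1)" if "i+1<m" for i using adj that by blast
  have spE: "sepE g (es!i)" if g: "L21_colouring V E g" and i: "i<m" for g i
    unfolding sepE_def
  proof (intro ballI impI)
    fix x y assume xy: "x \<in> es!i" "y \<in> es!i" "x \<noteq> y"
    hence "2 \<le> \<bar>int (g x) - int (g y)\<bar>"
      using g esV[OF i] esE[OF i] unfolding L21_colouring_def by blast
    thus "g x + 2 \<le> g y \<or> g y + 2 \<le> g x" by linarith
  qed
  have injE: "inj_on g (es!i \<union> es!(i+1))" if g: "L21_colouring V E g" and i: "i+1<m" for g i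
  proof (rule inj_onI)
    fix x y assume xy: "x \<in> es!i \<union> es!(i+1)" "y \<in> es!i \<union> es!(i+1)" "g x = g y"
    show "x = y"
    proof (rule ccontr)
      assume ne: "x \<noteq> y"
      have s1: "sepE g (es!i)" "sepE g (es!(i+1))" using spE[OF g] i by auto
      have same: False if "x \<in> es!k" "y \<in> es!k" "sepE g (es!k)" for k
        using that ne xy(3) unfolding sepE_def by force
      show False
      proof (cases "x \<in> es!i")
        case True
        show False
        proof (cases "y \<in> es!i")
          case True with \<open>x \<in> es!i\<close> show False using same s1 by blast
        next
          case False
          hence y1: "y \<in> es!(i+1)" "y \<noteq> vs!i" using xy vsin[OF i] by auto
          show False
          proof (cases "x = vs!i")
            case True then show False using same[of "i+1"] y1 vsin[OF i] s1 by blast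
          next
            case False
            have "vs!i \<in> es!i \<inter> es!(i+1) - {y, x}" using vsin[OF i] False y1 by auto
            hence "1 \<le> \<bar>int (g y) - int (g x)\<bar>"
              using g esV[of i] esV[of "i+1"] esE[of i] esE[of "i+1"] i \<open>x \<in> es!i\<close> y1 ne
              unfolding L21_colouring_def by (smt (verit) Suc_eq_plus1 Suc_lessD empty_iff subsetD)
            thus False using xy(3) by simp
          qed
        qed
      next
        case False
        hence x1: "x \<in> es!(i+1)" "x \<noteq> vs!i" using xy vsin[OF i] by auto
        show False
        proof (cases "y \<in> es!(i+1)")
          case True then show False using same[of "i+1"] x1 s1 by blast
        next
          case False
          hence y0: "y \<in> es!i" "y \<noteq> vs!i" using xy vsin[OF i] by auto
          have "vs!i \<in> es!i \<inter> es!(i+1) - {x, y}" using vsin[OF i] x1 y0 by auto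
          hence "1 \<le> \<bar>int (g x) - int (g y)\<bar>"
            using g esV[of i] esV[of "i+1"] esE[of i] esE[of "i+1"] i x1 y0 ne
            unfolding L21_colouring_def by (smt (verit) Suc_eq_plus1 Suc_lessD empty_iff subsetD)
          thus False using xy(3) by simp
        qed
      qed
    qed
  qed
  have "card (es!0) = r" using fin assms(2) by auto
  hence "es!0 \<noteq> {}" using r by auto
  hence Vne: "V \<noteq> {}" using esV[of 0] assms(2) by auto
  have MinMax: "Min (g ` V) \<le> g x \<and> g x \<le> Max (g ` V)" if "x \<in> V" for g x
    using finV that by auto

  have UBgen: "\<exists>g. L21_colouring V E g \<and> span V g \<le> B"
    if K1: "\<forall>i<m. finite (K i) \<and> card (K i) = r \<and> sparse (K i)"
      and K2: "\<forall>i. i+1<m \<longrightarrow> K i \<inter> K (i+1) = {T i}"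
      and K3: "\<forall>i. i+2<m \<longrightarrow> T i \<noteq> T (i+1)"
      and K4: "\<forall>i<m. K i \<subseteq> {..B}" for K T B
  proof -
    obtain g where g: "L21_colouring (\<Union>(set es)) (set es) g" "\<forall>x\<in>\<Union>(set es). \<exists>i<m. g x \<in> K i"
      using upper[OF len fin adj far K1 K2 K3] by blast
    have "\<forall>x\<in>V. g x \<le> B" using g(2) K4 unfolding VV by fastforce
    hence "span V g \<le> B" using span_le[OF finV Vne] by blast
    thus ?thesis using g(1) VV Ees by auto
  qed
  have lowrng: "Min (g ` V) \<le> g x \<and> g x \<le> Min (g ` V) + span V g" if "x \<in> V" for g x
    using MinMax[OF that, of g] unfolding span_def by linarith
  show ?thesis
  proof (intro conjI impI)
    assume m1: "m = 1"
    have V0: "V = es!0" using len m1 VV by (cases es) auto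
    show "lambda21 V E = 2 * r - 2"
    proof (rule lambda_eq)
      fix g assume g: "L21_colouring V E g"
      have sp: "sepE g (es!0)" using spE[OF g] m1 by simp
      have inj: "inj_on g V" unfolding V0 using sp unfolding sepE_def inj_on_def by force
      have "sparse (g ` V)" using sp unfolding V0 sepE_def sparse_def by force
      moreover have "card (g ` V) = r" using inj fin m1 V0 by (simp add: card_image)
      moreover have "g ` V \<subseteq> {Min (g ` V)..Max (g ` V)}" using finV by auto
      ultimately have "2 * r \<le> Max (g ` V) - Min (g ` V) + 2" using sparse_card[of "g ` V"] finV by auto
      thus "2 * r - 2 \<le> span V g" unfolding span_def by simp
    next
      show "\<exists>g. L21_colouring V E g \<and> span V g \<le> 2 * r - 2"
      proof (rule UBgen[of "\<lambda>_. (\<lambda>k. 2*k) ` {..<r}" "\<lambda>_. 0"])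
        show "\<forall>i<m. finite ((\<lambda>k. 2*k) ` {..<r}) \<and> card ((\<lambda>k. 2*k) ` {..<r}) = r \<and> sparse ((\<lambda>k. 2*k) ` {..<r})"
          using card_lin[of 0 r] unfolding sparse_def by auto
        show "\<forall>i. i+1<m \<longrightarrow> (\<lambda>k. 2*k) ` {..<r} \<inter> (\<lambda>k. 2*k) ` {..<r} = {0}" using m1 by simp
        show "\<forall>i. i+2<m \<longrightarrow> (0::nat) \<noteq> 0" using m1 by simp
        show "\<forall>i<m. (\<lambda>k. 2*k) ` {..<r} \<subseteq> {..2*r-2}" by auto
      qed
    qed
  next
    assume m2: "m = 2"
    have V01: "V = es!0 \<union> es!1" using len m2 VV by (cases es; cases "tl es") auto
    show "lambda21 V E = 2 * r - 1"
    proof (rule lambda_eq)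
      fix g assume g: "L21_colouring V E g"
      show "2 * r - 1 \<le> span V g"
      proof (rule ccontr)
        assume "\<not> 2 * r - 1 \<le> span V g"
        hence sp2: "span V g \<le> 2*r-2" by simp
        define mn where "mn = Min (g ` V)"
        define mx where "mx = Max (g ` V)"
        define c0 where "c0 = g (vs!0)"
        have v0: "vs!0 \<in> es!0" "vs!0 \<in> es!1" using vsin[of 0] m2 by auto
        have s0: "sepE g (es!0)" "sepE g (es!1)" using spE[OF g] m2 by auto
        have inj: "inj_on g V" unfolding V01 using injE[OF g, of 0] m2 by simp
        have cV: "card V = 2*r-1" unfolding V01 using card_two[of "es!0" "es!1" r "vs!0"] fin adj m2 by auto
        have rng: "g ` V \<subseteq> {mn..mx}" using MinMax[of _ g] unfolding mn_def mx_def by force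
        have c0r: "mn \<le> c0" "c0 \<le> mx" using MinMax[of "vs!0" g] v0 V01 unfolding mn_def mx_def c0_def by auto
        have nb: "t \<notin> g ` V" if "t = c0 + 1 \<or> c0 = t + 1" for t
        proof
          assume "t \<in> g ` V"
          then obtain x where x: "x \<in> V" "t = g x" by (rule imageE)
          have xe: "x \<in> es!0 \<or> x \<in> es!1" using x(1) V01 by simp
          have "g x = g (vs!0) + 1 \<or> g (vs!0) = g x + 1" using that x(2) unfolding c0_def by auto
          moreover hence xv: "x \<noteq> vs!0" by auto
          moreover have "g x + 2 \<le> g (vs!0) \<or> g (vs!0) + 2 \<le> g x" using xe s0 v0 xv unfolding sepE_def by blast
          ultimately show False by linarith
        qed
        obtain t where t: "t = c0 + 1 \<or> c0 = t + 1" "t \<in> {mn..mx}"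
        proof (cases "c0 < mx")
          case True then show ?thesis using that[of "c0+1"] c0r by auto
        next
          case False
          hence c0x: "c0 = mx" using c0r by simp
          have "card (es!0) > 1" using fin m2 r by auto
          have "card (es!0 - {vs!0}) = r - 1" using fin m2 v0 by (simp add: card_Diff_singleton)
          hence cd: "card (es!0 - {vs!0}) = r - 1" .
          have "es!0 - {vs!0} \<noteq> {}"
          proof
            assume "es!0 - {vs!0} = {}"
            with cd have "r - 1 = 0" by simp
            with r show False by simp
          qed
          then obtain y where y: "y \<in> es!0" "y \<noteq> vs!0" by blast
          have "g y + 2 \<le> c0 \<or> c0 + 2 \<le> g y" using s0(1) y v0(1) unfolding sepE_def c0_def by blast
          moreover have "mn \<le> g y" "g y \<le> mx" using MinMax[of y g] y V01 unfolding mn_def mx_def by auto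
          ultimately have gy: "g y + 2 \<le> c0" "mn \<le> g y" using c0x by auto
          hence "mn \<le> c0 - 1" "c0 - 1 \<le> mx" "c0 = (c0 - 1) + 1" using c0x by auto
          thus ?thesis using that[of "c0 - 1"] by auto
        qed
        have "card V + card {t} \<le> Suc mx - mn"
          by (rule miss[OF finV inj rng]) (use t nb in auto)
        moreover have "mx - mn \<le> 2*r-2" using sp2 unfolding span_def mn_def mx_def .
        moreover have "mn \<le> mx" using c0r by simp
        ultimately show False using cV r by simp
      qed
    next
      define K :: "nat \<Rightarrow> nat set" where "K i = (if i = 0 then (\<lambda>k. 2*k) ` {..<r} else insert 0 ((\<lambda>k. 2*k+3) ` {..<r-1}))" for i
      have par3: "2*a \<noteq> 2*b + (3::nat)" for a b by presburger
      show "\<exists>g. L21_colouring V E g \<and> span V g \<le> 2 * r - 1"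
      proof (rule UBgen[of K "\<lambda>_. 0"])
        have c1: "card ((\<lambda>k. 2*k+3) ` {..<r-1}) = r - 1" using card_lin[of 3 "r-1"] .
        have "0 \<notin> (\<lambda>k. 2*k+3) ` {..<r-1}" by auto
        hence c2: "card (insert 0 ((\<lambda>k. 2*k+3) ` {..<r-1})) = r" using c1 r by simp
        show "\<forall>i<m. finite (K i) \<and> card (K i) = r \<and> sparse (K i)"
          using card_lin[of 0 r] c2 unfolding K_def sparse_def by auto
        have z0: "(0::nat) \<in> (\<lambda>k. 2*k) ` {..<r}" using r by (intro image_eqI[of _ _ 0]) auto
        show "\<forall>i. i+1<m \<longrightarrow> K i \<inter> K (i+1) = {0}" using m2 z0 unfolding K_def by (auto simp: par3)
        show "\<forall>i. i+2<m \<longrightarrow> (0::nat) \<noteq> 0" using m2 by simp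
        show "\<forall>i<m. K i \<subseteq> {..2*r-1}" unfolding K_def using r by auto
      qed
    qed
  next
    assume m3: "3 \<le> m"
    show "lambda21 V E = 2 * r"
    proof (rule lambda_eq)
      fix g assume g: "L21_colouring V E g"
      show "2 * r \<le> span V g"
      proof (rule ccontr)
        assume "\<not> 2 * r \<le> span V g"
        hence sp2: "span V g \<le> 2*r-1" by simp
        have rg: "\<forall>x\<in>es!0 \<union> es!1 \<union> es!2. Min (g ` V) \<le> g x \<and> g x \<le> Min (g ` V) + (2*r-1)"
          using lowrng[of _ g] sp2 esV[of 0] esV[of 1] esV[of 2] m3 by fastforce
        have i01: "es!0 \<inter> es!1 = {vs!0}" using adj[rule_format, of 0] m3 by simp
        have i12: "es!1 \<inter> es!2 = {vs!1}" using adj[rule_format, of 1] m3 by (simp add: numeral_2_eq_2)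
        have i02: "es!0 \<inter> es!2 = {}" using far[rule_format, of 0 2] m3 by simp
        have f0: "finite (es!0)" "card (es!0) = r" using fin m3 by auto
        have f1: "finite (es!1)" "card (es!1) = r" using fin m3 by auto
        have f2: "finite (es!2)" "card (es!2) = r" using fin m3 by auto
        have s0: "sepE g (es!0)" "sepE g (es!1)" "sepE g (es!2)" using spE[OF g] m3 by auto
        have j0: "inj_on g (es!0 \<union> es!1)" using injE[OF g, of 0] m3 by auto
        have j1: "inj_on g (es!1 \<union> es!2)" using injE[OF g, of 1] m3 by (simp add: numeral_2_eq_2)
        show False using core[OF r f0(1) f1(1) f2(1) f0(2) f1(2) f2(2) i01 i12 i02 s0 j0 j1 rg] .
      qed
    next
      show "\<exists>g. L21_colouring V E g \<and> span V g \<le> 2 * r"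
      proof (rule UBgen[of "\<lambda>i. Kq r (i mod 4)" "\<lambda>i. Tq (i mod 4)"])
        show "\<forall>i<m. finite (Kq r (i mod 4)) \<and> card (Kq r (i mod 4)) = r \<and> sparse (Kq r (i mod 4))"
          using Kq_fin Kq_card[OF r] Kq_sparse by auto
        show "\<forall>i. i+1<m \<longrightarrow> Kq r (i mod 4) \<inter> Kq r ((i+1) mod 4) = {Tq (i mod 4)}"
        proof (intro allI impI)
          fix i have e: "(i+1) mod 4 = Suc (i mod 4) mod 4" by (simp add: mod_Suc_eq)
          show "Kq r (i mod 4) \<inter> Kq r ((i+1) mod 4) = {Tq (i mod 4)}" unfolding e by (rule Kq_int[OF r]) simp
        qed
        show "\<forall>i. i+2<m \<longrightarrow> Tq (i mod 4) \<noteq> Tq ((i+1) mod 4)"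
        proof (intro allI impI)
          fix i have e: "(i+1) mod 4 = Suc (i mod 4) mod 4" by (simp add: mod_Suc_eq)
          show "Tq (i mod 4) \<noteq> Tq ((i+1) mod 4)" unfolding e by (rule Tq_ne) simp
        qed
        show "\<forall>i<m. Kq r (i mod 4) \<subseteq> {..2*r}" using Kq_bound[OF r] by auto
      qed
    qed
  qed
qed


end
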